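(* Let $S$ be a finite set with $|S|\ge2$ and fix $C>1$. Define $\omega_S:F(S)\to[1,\infty)$ by $\omega_S(e)=C^{\gamma_S(e)}$ if $e\neq\theta_S$ and $\omega_S(\theta_S)=C$. Then $\omega_S$ is a submultiplicative weight on $F(S)$. Moreover, defining $\psi:F(S)\to\{0,1\}$ by $\psi(e)=1$ for $e\ne\theta_S$ and $\psi(\theta_S)=0$: (i) $\sup_{e,f\in F(S)}\dfrac{|\psi(e)\psi(f)-\psi(ef)|}{\omega_S(e)\omega_S(f)}\le C^{-|S|}$; (ii) for every multiplicative function $\phi:F(S)\to\{0,1\}$, $\sup_{e\in F(S)}\omega_S(e)^{-1}|\psi(e)-\phi(e)|\ge C^{-1}$.
   Context: $F(S)$ is the free semilattice on $S$: the set of non-empty subsets of $S$ with product given by union. $\gamma_S(e)$ is the cardinality of $e\in F(S)$ (the minimal number of generators needed to produce $e$), and $\theta_S=S$ is the least (zero) element of $F(S)$. A weight $\omega$ is submultiplicative if $\omega(xy)\le\omega(x)\omega(y)$. *)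

theory Defs
  imports Complex_Main
begin

text \<open>Free semilattice F(S): non-empty subsets of S, product = union.\<close>
definition FS :: "'a set \<Rightarrow> 'a set set" where
  "FS S = {e. e \<subseteq> S \<and> e \<noteq> {}}"

definition fs_mult :: "'a set \<Rightarrow> 'a set \<Rightarrow> 'a set" where
  "fs_mult e f = e \<union> f"

text \<open>gamma_S(e): cardinality of e; theta_S = S is the zero element.\<close>
definition gammaS :: "'a set \<Rightarrow> nat" where
  "gammaS e = card e"

definition thetaS :: "'a set \<Rightarrow> 'a set" where
  "thetaS S = S"

definition omegaS :: "real \<Rightarrow> 'a set \<Rightarrow> 'a set \<Rightarrow> real" where
  "omegaS C S e = (if e \<noteq> thetaS S then C ^ gammaS e else C)"

definition psiS :: "'a set \<Rightarrow> 'a set \<Rightarrow> real" where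
  "psiS S e = (if e \<noteq> thetaS S then 1 else 0)"

definition submult_weight :: "'a set \<Rightarrow> ('a set \<Rightarrow> real) \<Rightarrow> bool" where
  "submult_weight S w \<longleftrightarrow> (\<forall>e\<in>FS S. w e \<ge> 1) \<and>
     (\<forall>e\<in>FS S. \<forall>f\<in>FS S. w (fs_mult e f) \<le> w e * w f)"

definition multiplicative01 :: "'a set \<Rightarrow> ('a set \<Rightarrow> real) \<Rightarrow> bool" where
  "multiplicative01 S \<phi> \<longleftrightarrow> (\<forall>e\<in>FS S. \<phi> e \<in> {0, 1}) \<and>
     (\<forall>e\<in>FS S. \<forall>f\<in>FS S. \<phi> (fs_mult e f) = \<phi> e * \<phi> f)"

end

theory Submission
  imports Defs
begin

lemma FS_finite: "finite S \<Longrightarrow> finite (FS S)"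
  unfolding FS_def by (rule finite_subset[of _ "Pow S"]) auto

lemma omega_ge: assumes "C > 1" "e \<in> FS S" "finite S" shows "omegaS C S e \<ge> C"
proof -
  have "card e \<ge> 1" using assms unfolding FS_def
    by (metis (mono_tags, lifting) One_nat_def Suc_leI card_gt_0_iff finite_subset mem_Collect_eq)
  hence "C ^ 1 \<le> C ^ card e" using assms by (intro power_increasing) auto
  thus ?thesis unfolding omegaS_def gammaS_def by auto
qed

lemma all_one:
  assumes "multiplicative01 S \<phi>" "\<forall>x\<in>S. \<phi> {x} = 1"
  shows "finite A \<Longrightarrow> A \<noteq> {} \<Longrightarrow> A \<subseteq> S \<Longrightarrow> \<phi> A = 1"
proof (induction A rule: finite_ne_induct)
  case (singleton x) then show ?case using assms by auto
next
  case (insert x F)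
  have "insert x F = fs_mult {x} F" unfolding fs_mult_def by auto
  moreover have "{x} \<in> FS S" "F \<in> FS S" using insert unfolding FS_def by auto
  moreover have "\<phi> {x} = 1" "\<phi> F = 1" using insert assms by auto
  moreover have "\<phi> (fs_mult {x} F) = \<phi> {x} * \<phi> F"
    using assms(1) \<open>{x} \<in> FS S\<close> \<open>F \<in> FS S\<close> unfolding multiplicative01_def by blast
  ultimately show ?case by simp
qed

theorem propositionp:
  fixes S :: "'a set" and C :: real
  assumes "finite S" and "card S \<ge> 2" and "C > 1"
  shows "submult_weight S (omegaS C S)
    \<and> (SUP p \<in> FS S \<times> FS S.
          \<bar>psiS S (fst p) * psiS S (snd p) - psiS S (fs_mult (fst p) (snd p))\<bar>
            / (omegaS C S (fst p) * omegaS C S (snd p))) \<le> C powi (- int (card S))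
    \<and> (\<forall>\<phi>. multiplicative01 S \<phi> \<longrightarrow>
          (SUP e \<in> FS S. \<bar>psiS S e - \<phi> e\<bar> / omegaS C S e) \<ge> 1 / C)"
proof (intro conjI allI impI)
  have Sne: "S \<noteq> {}" using assms by auto
  have SFS: "S \<in> FS S" using Sne unfolding FS_def by auto
  have fin: "finite (FS S)" using FS_finite assms by auto
  show "submult_weight S (omegaS C S)"
    unfolding submult_weight_def
  proof (intro conjI ballI)
    fix e assume "e \<in> FS S" thus "omegaS C S e \<ge> 1" using omega_ge[of C e S] assms by auto
  next
    fix e f assume e: "e \<in> FS S" and f: "f \<in> FS S"
    have we: "omegaS C S e \<ge> C" and wf: "omegaS C S f \<ge> C" using omega_ge e f assms by auto
    show "omegaS C S (fs_mult e f) \<le> omegaS C S e * omegaS C S f"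
    proof (cases "e \<union> f = S")
      case True
      have "C * 1 \<le> omegaS C S e * omegaS C S f"
        using we wf assms by (intro mult_mono) auto
      thus ?thesis using True unfolding omegaS_def fs_mult_def thetaS_def by auto
    next
      case False
      hence ne: "e \<noteq> S" "f \<noteq> S" using e f unfolding FS_def by auto
      have fe: "finite e" "finite f" using e f assms unfolding FS_def by (auto intro: finite_subset)
      have "card (e \<union> f) \<le> card e + card f" by (rule card_Un_le)
      hence "C ^ card (e \<union> f) \<le> C ^ (card e + card f)" using assms by (intro power_increasing) auto
      thus ?thesis using False ne unfolding omegaS_def fs_mult_def thetaS_def gammaS_def
        by (simp add: power_add)
    qed
  qed
  show "(SUP p \<in> FS S \<times> FS S.
          \<bar>psiS S (fst p) * psiS S (snd p) - psiS S (fs_mult (fst p) (snd p))\<bar>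
            / (omegaS C S (fst p) * omegaS C S (snd p))) \<le> C powi (- int (card S))"
  proof (rule cSUP_least)
    show "FS S \<times> FS S \<noteq> {}" using SFS by auto
  next
    fix p assume p: "p \<in> FS S \<times> FS S"
    obtain e f where pe: "p = (e, f)" by force
    have e: "e \<in> FS S" and f: "f \<in> FS S" using p pe by auto
    have pos: "C powi (- int (card S)) \<ge> 0" using assms by simp
    show "\<bar>psiS S (fst p) * psiS S (snd p) - psiS S (fs_mult (fst p) (snd p))\<bar>
            / (omegaS C S (fst p) * omegaS C S (snd p)) \<le> C powi (- int (card S))"
    proof (cases "e \<noteq> S \<and> f \<noteq> S \<and> e \<union> f = S")
      case False
      then have "\<bar>psiS S e * psiS S f - psiS S (fs_mult e f)\<bar> = 0"
        using e f unfolding psiS_def thetaS_def fs_mult_def FS_def by auto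
      thus ?thesis using pe pos by simp
    next
      case True
      have fe: "finite e" "finite f" using e f assms unfolding FS_def by (auto intro: finite_subset)
      have "card S \<le> card e + card f" using True card_Un_le by metis
      hence le: "C ^ card S \<le> C ^ (card e + card f)" using assms by (intro power_increasing) auto
      have val: "\<bar>psiS S e * psiS S f - psiS S (fs_mult e f)\<bar>
            / (omegaS C S e * omegaS C S f) = 1 / C ^ (card e + card f)"
        using True unfolding psiS_def thetaS_def fs_mult_def omegaS_def gammaS_def
        by (simp add: power_add)
      have "1 / C ^ (card e + card f) \<le> 1 / C ^ card S"
        using le assms by (intro divide_left_mono) auto
      also have "\<dots> = C powi (- int (card S))"
        by (simp add: power_int_minus field_simps)
      finally show ?thesis using val pe by simp
    qed
  qed
  fix \<phi> assume m: "multiplicative01 S \<phi>"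
  let ?g = "\<lambda>e. \<bar>psiS S e - \<phi> e\<bar> / omegaS C S e"
  have bdd: "bdd_above (?g ` FS S)" using fin by auto
  show "(SUP e \<in> FS S. ?g e) \<ge> 1 / C"
  proof (cases "\<phi> S = 1")
    case True
    have "?g S = 1 / C" using True unfolding psiS_def thetaS_def omegaS_def by simp
    thus ?thesis using cSUP_upper[OF SFS bdd] by simp
  next
    case False
    hence "\<phi> S = 0" using m SFS unfolding multiplicative01_def by auto
    have "\<exists>x\<in>S. \<phi> {x} \<noteq> 1"
    proof (rule ccontr)
      assume "\<not> ?thesis"
      hence "\<phi> S = 1" using all_one[OF m, of S] assms Sne by auto
      thus False using False by simp
    qed
    then obtain x where x: "x \<in> S" "\<phi> {x} \<noteq> 1" by auto
    have xF: "{x} \<in> FS S" using x unfolding FS_def by auto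
    hence "\<phi> {x} = 0" using m x unfolding multiplicative01_def by auto
    moreover have "{x} \<noteq> S" using assms x by auto
    ultimately have "?g {x} = 1 / C" unfolding psiS_def thetaS_def omegaS_def gammaS_def by simp
    thus ?thesis using cSUP_upper[OF xF bdd] by simp
  qed
qed

end
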